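(* Let $\pi:(X,T)\to(Y,T)$ be an almost one-to-one (respectively proximal, equicontinuous, distal) extension between minimal systems. Then for every $d\in\mathbb{N}$, $\pi^{(d)}:(N_d(X),\mathcal{G}_d(T))\to(N_d(Y),\mathcal{G}_d(T))$ is also almost one-to-one (respectively proximal, equicontinuous, distal).
   Context: $\pi^{(d)}=\pi\times\cdots\times\pi$; $N_d(X)=\overline{\{(T^{p+q}x,\dots,T^{p+dq}x)\}}$; $\mathcal{G}_d(T)=\langle T\times\cdots\times T,\ T\times T^2\times\cdots\times T^d\rangle$. For an extension $\phi:(X,G)\to(Y,G)$ with $R_\phi=\{(x,x'):\phi(x)=\phi(x')\}$: almost one-to-one means some fibre is a singleton; proximal means every pair in $R_\phi$ satisfies $\inf_g\rho(gx,gx')=0$; distal means no pair of distinct points of $R_\phi$ is proximal; equicontinuous means for every $\varepsilon>0$ there is $\delta>0$ with $\sup_g\rho(gx,gx')<\varepsilon$ whenever $(x,x')\in R_\phi$, $\rho(x,x')<\delta$. *)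

theory Defs
  imports "HOL-Analysis.Analysis" "HOL-Library.FuncSet"
begin

definition zit :: "('a \<Rightarrow> 'a) \<Rightarrow> ('a \<Rightarrow> 'a) \<Rightarrow> int \<Rightarrow> 'a \<Rightarrow> 'a" where
  "zit T Ti n = (if n \<ge> 0 then T ^^ nat n else Ti ^^ nat (- n))"

text \<open>Max metric on d-tuples (x_1,...,x_d), represented as extensional functions on {1..d}.\<close>
definition maxdist_d :: "nat \<Rightarrow> ('b \<Rightarrow> 'b \<Rightarrow> real) \<Rightarrow> (nat \<Rightarrow> 'b) \<Rightarrow> (nat \<Rightarrow> 'b) \<Rightarrow> real" where
  "maxdist_d d \<rho> x y = Max ((\<lambda>i. \<rho> (x i) (y i)) ` {1..d})"

text \<open>N_d(X): closure in X^d of {(T^(p+q)x, ..., T^(p+dq)x) : x in X, p,q in Z}.\<close>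
definition Nd :: "nat \<Rightarrow> 'a::metric_space set \<Rightarrow> ('a \<Rightarrow> 'a) \<Rightarrow> ('a \<Rightarrow> 'a) \<Rightarrow> (nat \<Rightarrow> 'a) set" where
  "Nd d X T Ti = {z \<in> PiE {1..d} (\<lambda>_. X). \<forall>e>0. \<exists>x\<in>X. \<exists>p q::int.
      maxdist_d d dist z (\<lambda>i\<in>{1..d}. zit T Ti (p + int i * q) x) < e}"

text \<open>The action of G_d(T): (a,b) acts as (T x ... x T)^a (T x T^2 x ... x T^d)^b.\<close>
definition Gd_act :: "nat \<Rightarrow> ('a \<Rightarrow> 'a) \<Rightarrow> ('a \<Rightarrow> 'a) \<Rightarrow> int \<times> int \<Rightarrow> (nat \<Rightarrow> 'a) \<Rightarrow> (nat \<Rightarrow> 'a)" where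
  "Gd_act d T Ti = (\<lambda>(a, b) z. \<lambda>i\<in>{1..d}. zit T Ti (a + int i * b) (z i))"

definition prod_map :: "nat \<Rightarrow> ('a \<Rightarrow> 'b) \<Rightarrow> (nat \<Rightarrow> 'a) \<Rightarrow> (nat \<Rightarrow> 'b)" where
  "prod_map d \<pi> = (\<lambda>z. \<lambda>i\<in>{1..d}. \<pi> (z i))"

definition cont_wrt :: "('a \<Rightarrow> 'a \<Rightarrow> real) \<Rightarrow> ('b \<Rightarrow> 'b \<Rightarrow> real) \<Rightarrow> 'a set \<Rightarrow> ('a \<Rightarrow> 'b) \<Rightarrow> bool" where
  "cont_wrt \<rho>1 \<rho>2 Z f = (\<forall>x\<in>Z. \<forall>e>0. \<exists>\<delta>>0. \<forall>x'\<in>Z. \<rho>1 x x' < \<delta> \<longrightarrow> \<rho>2 (f x) (f x') < e)"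

definition is_extension where
  "is_extension \<rho>1 \<rho>2 Z1 Z2 I act1 act2 \<phi> =
     (\<phi> ` Z1 = Z2 \<and> cont_wrt \<rho>1 \<rho>2 Z1 \<phi> \<and>
      (\<forall>g\<in>I. \<forall>x\<in>Z1. \<phi> (act1 g x) = act2 g (\<phi> x)))"

definition minimal_sys :: "('a \<Rightarrow> 'a \<Rightarrow> real) \<Rightarrow> 'a set \<Rightarrow> 'g set \<Rightarrow> ('g \<Rightarrow> 'a \<Rightarrow> 'a) \<Rightarrow> bool" where
  "minimal_sys \<rho> Z I act = (Z \<noteq> {} \<and> (\<forall>x\<in>Z. \<forall>z\<in>Z. \<forall>e>0. \<exists>g\<in>I. \<rho> (act g x) z < e))"

definition almost_one_one :: "'a set \<Rightarrow> ('a \<Rightarrow> 'b) \<Rightarrow> bool" where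
  "almost_one_one Z \<phi> = (\<exists>x\<in>Z. \<forall>x'\<in>Z. \<phi> x' = \<phi> x \<longrightarrow> x' = x)"

definition proximal_pair :: "('a \<Rightarrow> 'a \<Rightarrow> real) \<Rightarrow> 'g set \<Rightarrow> ('g \<Rightarrow> 'a \<Rightarrow> 'a) \<Rightarrow> 'a \<Rightarrow> 'a \<Rightarrow> bool" where
  "proximal_pair \<rho> I act x x' = ((INF g\<in>I. \<rho> (act g x) (act g x')) = 0)"

definition proximal_ext where
  "proximal_ext \<rho> Z I act \<phi> =
     (\<forall>x\<in>Z. \<forall>x'\<in>Z. \<phi> x = \<phi> x' \<longrightarrow> proximal_pair \<rho> I act x x')"

definition distal_ext where
  "distal_ext \<rho> Z I act \<phi> =
     (\<forall>x\<in>Z. \<forall>x'\<in>Z. \<phi> x = \<phi> x' \<and> x \<noteq> x' \<longrightarrow> \<not> proximal_pair \<rho> I act x x')"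

definition equicont_ext where
  "equicont_ext \<rho> Z I act \<phi> =
     (\<forall>e>0. \<exists>\<delta>>0. \<forall>x\<in>Z. \<forall>x'\<in>Z. \<phi> x = \<phi> x' \<and> \<rho> x x' < \<delta> \<longrightarrow>
        (SUP g\<in>I. \<rho> (act g x) (act g x')) < e)"

end

theory Submission
  imports Defs
begin


lemma funpow_in: "f ` X \<subseteq> X \<Longrightarrow> x \<in> X \<Longrightarrow> (f ^^ n) x \<in> X"
  by (induct n) auto

lemma funpow_cont: "continuous_on X f \<Longrightarrow> f ` X \<subseteq> X \<Longrightarrow> continuous_on X (f ^^ n)"
proof (induct n)
  case 0 then show ?case by (simp add: continuous_on_id)
next
  case (Suc n)
  have "(f ^^ n) ` X \<subseteq> X" using funpow_in[OF Suc.prems(2)] by blast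
  then have "continuous_on ((f ^^ n) ` X) f" using Suc.prems(1) continuous_on_subset by blast
  then show ?case using Suc continuous_on_compose[of X "f ^^ n" f] by simp
qed

lemma zit_in: "homeomorphism X X T Ti \<Longrightarrow> x \<in> X \<Longrightarrow> zit T Ti n x \<in> X"
  unfolding zit_def homeomorphism_def by (auto intro!: funpow_in)

lemma zit_cont: "homeomorphism X X T Ti \<Longrightarrow> continuous_on X (zit T Ti n)"
  unfolding zit_def homeomorphism_def by (auto intro!: funpow_cont)

lemma zit_0[simp]: "zit T Ti 0 = id"
  unfolding zit_def by simp

lemma zit_neg: "k \<le> 0 \<Longrightarrow> zit T Ti k = Ti ^^ nat (- k)"
  unfolding zit_def by auto

lemma zit_succ:
  assumes h: "homeomorphism X X T Ti" and x: "x \<in> X"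
  shows "zit T Ti (k+1) x = T (zit T Ti k x)"
proof (cases "k \<ge> 0")
  case True
  then have "nat (k+1) = Suc (nat k)" by simp
  then show ?thesis using True unfolding zit_def by simp
next
  case False
  then have e: "nat (-k) = Suc (nat (-(k+1)))" by simp
  have y: "(Ti ^^ nat (-(k+1))) x \<in> X" using h x unfolding homeomorphism_def by (auto intro!: funpow_in)
  have "zit T Ti k x = Ti ((Ti ^^ nat (-(k+1))) x)" using False zit_neg[of k T Ti] e by simp
  moreover have "zit T Ti (k+1) x = (Ti ^^ nat (-(k+1))) x" using False zit_neg[of "k+1" T Ti] by simp
  ultimately show ?thesis using y h unfolding homeomorphism_def by simp
qed

lemma zit_pred:
  assumes h: "homeomorphism X X T Ti" and x: "x \<in> X"
  shows "zit T Ti (k-1) x = Ti (zit T Ti k x)"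
proof -
  have "zit T Ti k x = T (zit T Ti (k-1) x)" using zit_succ[OF h x, of "k-1"] by simp
  then show ?thesis using zit_in[OF h x, of "k-1"] h unfolding homeomorphism_def by simp
qed

lemma zit_add:
  assumes h: "homeomorphism X X T Ti"
  shows "\<forall>x\<in>X. zit T Ti (m+n) x = zit T Ti m (zit T Ti n x)"
proof (induct m rule: int_induct[where k=0])
  case base then show ?case by simp
next
  case (step1 i)
  show ?case
  proof
    fix x assume x: "x \<in> X"
    have "zit T Ti (i+1+n) x = zit T Ti ((i+n)+1) x" by (simp add: ac_simps)
    also have "\<dots> = T (zit T Ti (i+n) x)" using zit_succ[OF h x] by simp
    also have "\<dots> = T (zit T Ti i (zit T Ti n x))" using step1(2) x by simp
    also have "\<dots> = zit T Ti (i+1) (zit T Ti n x)" using zit_succ[OF h zit_in[OF h x]] by simp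
    finally show "zit T Ti (i+1+n) x = zit T Ti (i+1) (zit T Ti n x)" .
  qed
next
  case (step2 i)
  show ?case
  proof
    fix x assume x: "x \<in> X"
    have "zit T Ti (i-1+n) x = zit T Ti ((i+n)-1) x" by (simp add: algebra_simps)
    also have "\<dots> = Ti (zit T Ti (i+n) x)" using zit_pred[OF h x] by simp
    also have "\<dots> = Ti (zit T Ti i (zit T Ti n x))" using step2(2) x by simp
    also have "\<dots> = zit T Ti (i-1) (zit T Ti n x)" using zit_pred[OF h zit_in[OF h x]] by simp
    finally show "zit T Ti (i-1+n) x = zit T Ti (i-1) (zit T Ti n x)" .
  qed
qed

lemma finite_subseq:
  fixes w :: "nat \<Rightarrow> 'i \<Rightarrow> 'a::metric_space"
  assumes X: "compact X" and S: "finite S" and w: "\<forall>k. \<forall>i\<in>S. w k i \<in> X"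
  shows "\<exists>r c. strict_mono r \<and> (\<forall>i\<in>S. c i \<in> X \<and> (\<lambda>k. w (r k) i) \<longlonglongrightarrow> c i)"
  using S w
proof (induct S arbitrary: w rule: finite_induct)
  case empty
  show ?case by (rule exI[of _ id]) (auto simp: strict_mono_def)
next
  case (insert a S)
  then obtain r c where r: "strict_mono r" and c: "\<forall>i\<in>S. c i \<in> X \<and> (\<lambda>k. w (r k) i) \<longlonglongrightarrow> c i"
    by blast
  have "\<forall>k. w (r k) a \<in> X" using insert.prems by auto
  then obtain l r' where l: "l \<in> X" and r': "strict_mono r'" and lim: "((\<lambda>k. w (r k) a) \<circ> r') \<longlonglongrightarrow> l"
    using seq_compactE[OF compact_imp_seq_compact[OF X]] by metis
  show ?case
  proof (intro exI conjI ballI)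
    show "strict_mono (r \<circ> r')" using r r' by (rule strict_mono_o)
    fix i assume i: "i \<in> insert a S"
    show "(c(a:=l)) i \<in> X" using i c l by auto
    show "(\<lambda>k. w ((r \<circ> r') k) i) \<longlonglongrightarrow> (c(a:=l)) i"
    proof (cases "i = a")
      case True then show ?thesis using lim by (simp add: o_def)
    next
      case False
      then have "i \<in> S" using i by auto
      then have "(\<lambda>k. w (r k) i) \<longlonglongrightarrow> c i" using c by auto
      from LIMSEQ_subseq_LIMSEQ[OF this r'] show ?thesis using False by (simp add: o_def)
    qed
  qed
qed




lemma prox_prod:
  fixes T :: "int \<Rightarrow> 'a::metric_space \<Rightarrow> 'a" and TY :: "int \<Rightarrow> 'b::metric_space \<Rightarrow> 'b"
    and \<pi> :: "'a \<Rightarrow> 'b"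
  assumes X: "compact X" and Tin: "\<And>n x. x \<in> X \<Longrightarrow> T n x \<in> X"
    and Tc: "\<And>n. continuous_on X (T n)"
    and Tadd: "\<And>m n x. x \<in> X \<Longrightarrow> T (m+n) x = T m (T n x)"
    and pc: "continuous_on X \<pi>"
    and eqv: "\<And>n x. x \<in> X \<Longrightarrow> \<pi> (T n x) = TY n (\<pi> x)"
    and prox: "\<And>x x' e. x \<in> X \<Longrightarrow> x' \<in> X \<Longrightarrow> \<pi> x = \<pi> x' \<Longrightarrow> e > 0 \<Longrightarrow> \<exists>n. dist (T n x) (T n x') < e"
  shows "finite S \<Longrightarrow> \<forall>i\<in>S. z i \<in> X \<and> z' i \<in> X \<and> \<pi> (z i) = \<pi> (z' i) \<Longrightarrow> e > 0 \<Longrightarrow>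
    \<exists>n. \<forall>i\<in>S. dist (T n (z i)) (T n (z' i)) < e"
proof (induct S arbitrary: z z' e rule: finite_induct)
  case empty then show ?case by simp
next
  case (insert a S)
  have za: "z a \<in> X" "z' a \<in> X" "\<pi> (z a) = \<pi> (z' a)" using insert.prems by auto
  have "\<forall>k. \<exists>n. dist (T n (z a)) (T n (z' a)) < inverse (real (Suc k))"
    using prox[OF za] by simp
  then have "\<exists>N. \<forall>k. dist (T (N k) (z a)) (T (N k) (z' a)) < inverse (real (Suc k))"
    by (rule choice)
  then obtain N where N: "\<And>k. dist (T (N k) (z a)) (T (N k) (z' a)) < inverse (real (Suc k))"
    by blast
  define W where "W = (\<lambda>k i. T (N k) (z i))"
  define W' where "W' = (\<lambda>k i. T (N k) (z' i))"
  have fin: "finite (insert a S)" using insert by simp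
  obtain r1 c where r1: "strict_mono r1" and c: "\<forall>i\<in>insert a S. c i \<in> X \<and> (\<lambda>k. W (r1 k) i) \<longlonglongrightarrow> c i"
  proof -
    have "\<forall>k. \<forall>i\<in>insert a S. W k i \<in> X" using insert.prems Tin unfolding W_def by simp
    from finite_subseq[OF X fin this] show ?thesis using that by blast
  qed
  obtain r2 c' where r2: "strict_mono r2" and c': "\<forall>i\<in>insert a S. c' i \<in> X \<and> (\<lambda>k. W' (r1 (r2 k)) i) \<longlonglongrightarrow> c' i"
  proof -
    have "\<forall>k. \<forall>i\<in>insert a S. W' (r1 k) i \<in> X" using insert.prems Tin unfolding W'_def by simp
    from finite_subseq[OF X fin this] show ?thesis using that by blast
  qed
  define r where "r = r1 \<circ> r2"
  have r: "strict_mono r" unfolding r_def using r1 r2 by (rule strict_mono_o)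
  have cW: "\<And>i. i \<in> insert a S \<Longrightarrow> (\<lambda>k. W (r k) i) \<longlonglongrightarrow> c i"
  proof -
    fix i assume "i \<in> insert a S"
    then have "(\<lambda>k. W (r1 k) i) \<longlonglongrightarrow> c i" using c by auto
    from LIMSEQ_subseq_LIMSEQ[OF this r2] show "(\<lambda>k. W (r k) i) \<longlonglongrightarrow> c i" by (simp add: r_def o_def)
  qed
  have cW': "\<And>i. i \<in> insert a S \<Longrightarrow> (\<lambda>k. W' (r k) i) \<longlonglongrightarrow> c' i"
    using c' unfolding r_def o_def by blast
  have inX: "\<And>i. i \<in> insert a S \<Longrightarrow> c i \<in> X \<and> c' i \<in> X" using c c' by auto
  have caa: "c a = c' a"
  proof -
    have l1: "(\<lambda>k. dist (W (r k) a) (W' (r k) a)) \<longlonglongrightarrow> dist (c a) (c' a)"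
      using cW cW' by (intro tendsto_dist) auto
    have inv0: "(\<lambda>k. inverse (real (Suc (r k)))) \<longlonglongrightarrow> 0"
      using LIMSEQ_subseq_LIMSEQ[OF LIMSEQ_inverse_real_of_nat r] by (simp add: o_def)
    have l2: "(\<lambda>k. dist (W (r k) a) (W' (r k) a)) \<longlonglongrightarrow> 0"
    proof (rule tendsto_sandwich[OF _ _ tendsto_const inv0])
      show "\<forall>\<^sub>F n in sequentially. 0 \<le> dist (W (r n) a) (W' (r n) a)" by simp
      show "\<forall>\<^sub>F n in sequentially. dist (W (r n) a) (W' (r n) a) \<le> inverse (real (Suc (r n)))"
        using N unfolding W_def W'_def by (intro always_eventually allI less_imp_le) blast
    qed
    from LIMSEQ_unique[OF l1 l2] show ?thesis by simp
  qed
  have pic: "\<forall>i\<in>S. c i \<in> X \<and> c' i \<in> X \<and> \<pi> (c i) = \<pi> (c' i)"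
  proof
    fix i assume i: "i \<in> S"
    then have iS: "i \<in> insert a S" by simp
    have zi: "z i \<in> X" "z' i \<in> X" "\<pi> (z i) = \<pi> (z' i)" using insert.prems i by auto
    have "(\<lambda>k. \<pi> (W (r k) i)) \<longlonglongrightarrow> \<pi> (c i)"
      using continuous_on_tendsto_compose[OF pc cW[OF iS]] inX[OF iS] zi Tin unfolding W_def by auto
    moreover have "(\<lambda>k. \<pi> (W' (r k) i)) \<longlonglongrightarrow> \<pi> (c' i)"
      using continuous_on_tendsto_compose[OF pc cW'[OF iS]] inX[OF iS] zi Tin unfolding W'_def by auto
    moreover have "(\<lambda>k. \<pi> (W (r k) i)) = (\<lambda>k. \<pi> (W' (r k) i))"
      unfolding W_def W'_def using eqv zi by simp
    ultimately have "(\<lambda>k. \<pi> (W' (r k) i)) \<longlonglongrightarrow> \<pi> (c i)" "(\<lambda>k. \<pi> (W' (r k) i)) \<longlonglongrightarrow> \<pi> (c' i)"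
      by simp_all
    then have "\<pi> (c i) = \<pi> (c' i)" by (rule LIMSEQ_unique)
    then show "c i \<in> X \<and> c' i \<in> X \<and> \<pi> (c i) = \<pi> (c' i)" using inX[OF iS] by simp
  qed
  have e3: "e/3 > 0" using insert.prems by simp
  obtain m where m: "\<forall>i\<in>S. dist (T m (c i)) (T m (c' i)) < e/3"
    using insert.hyps(3)[OF pic e3] by blast
  have ev: "\<forall>\<^sub>F k in sequentially. \<forall>i\<in>insert a S.
      dist (T m (W (r k) i)) (T m (c i)) < e/3 \<and> dist (T m (W' (r k) i)) (T m (c' i)) < e/3"
  proof (rule eventually_ball_finite[OF fin], rule ballI)
    fix i assume iS: "i \<in> insert a S"
    have zi: "z i \<in> X" "z' i \<in> X" using insert.prems iS by auto
    have t1: "(\<lambda>k. T m (W (r k) i)) \<longlonglongrightarrow> T m (c i)"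
      using continuous_on_tendsto_compose[OF Tc cW[OF iS]] inX[OF iS] zi Tin unfolding W_def by auto
    have t2: "(\<lambda>k. T m (W' (r k) i)) \<longlonglongrightarrow> T m (c' i)"
      using continuous_on_tendsto_compose[OF Tc cW'[OF iS]] inX[OF iS] zi Tin unfolding W'_def by auto
    show "\<forall>\<^sub>F k in sequentially. dist (T m (W (r k) i)) (T m (c i)) < e/3 \<and> dist (T m (W' (r k) i)) (T m (c' i)) < e/3"
      using tendstoD[OF t1 e3] tendstoD[OF t2 e3] by (rule eventually_conj)
  qed
  then obtain K where K: "\<forall>i\<in>insert a S.
      dist (T m (W (r K) i)) (T m (c i)) < e/3 \<and> dist (T m (W' (r K) i)) (T m (c' i)) < e/3"
    unfolding eventually_sequentially by blast
  show ?case
  proof (intro exI ballI)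
    fix i assume iS: "i \<in> insert a S"
    have zi: "z i \<in> X" "z' i \<in> X" using insert.prems iS by auto
    have e1: "T (m + N (r K)) (z i) = T m (W (r K) i)" using Tadd zi unfolding W_def by simp
    have e2: "T (m + N (r K)) (z' i) = T m (W' (r K) i)" using Tadd zi unfolding W'_def by simp
    have tri: "dist (T m (W (r K) i)) (T m (W' (r K) i)) \<le>
       dist (T m (W (r K) i)) (T m (c i)) + dist (T m (c i)) (T m (c' i)) + dist (T m (W' (r K) i)) (T m (c' i))"
      using dist_triangle[of "T m (W (r K) i)" "T m (W' (r K) i)" "T m (c i)"]
        dist_triangle[of "T m (c i)" "T m (W' (r K) i)" "T m (c' i)"] by (simp add: dist_commute)
    have mid: "dist (T m (c i)) (T m (c' i)) < e/3"
      using iS m caa e3 by (cases "i = a") auto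
    show "dist (T (m + N (r K)) (z i)) (T (m + N (r K)) (z' i)) < e"
    proof -
      have "dist (T m (W (r K) i)) (T m (c i)) < e/3" "dist (T m (W' (r K) i)) (T m (c' i)) < e/3"
        using K iS by auto
      then show ?thesis unfolding e1 e2 using tri mid by linarith
    qed
  qed
qed




lemma maxdist_less: "d \<ge> 1 \<Longrightarrow> maxdist_d d \<rho> x y < e \<longleftrightarrow> (\<forall>i\<in>{1..d}. \<rho> (x i) (y i) < e)"
  unfolding maxdist_d_def by (subst Max_less_iff) auto

lemma maxdist_le: "d \<ge> 1 \<Longrightarrow> maxdist_d d \<rho> x y \<le> e \<longleftrightarrow> (\<forall>i\<in>{1..d}. \<rho> (x i) (y i) \<le> e)"
  unfolding maxdist_d_def by (subst Max_le_iff) auto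

lemma maxdist_ge: "i \<in> {1..d} \<Longrightarrow> \<rho> (x i) (y i) \<le> maxdist_d d \<rho> x y"
  unfolding maxdist_d_def by (rule Max_ge) auto

lemma maxdist_nonneg: "d \<ge> 1 \<Longrightarrow> 0 \<le> maxdist_d d dist x y"
proof -
  assume "d \<ge> 1"
  then have "dist (x 1) (y 1) \<le> maxdist_d d dist x y" by (intro maxdist_ge) auto
  then show ?thesis using zero_le_dist[of "x 1" "y 1"] by linarith
qed

lemma Gd_act_app: "i \<in> {1..d} \<Longrightarrow> Gd_act d T Ti g z i = zit T Ti (fst g + int i * snd g) (z i)"
  unfolding Gd_act_def by (cases g) auto

lemma inf0_iff:
  fixes f :: "'g \<Rightarrow> real"
  assumes A: "A \<noteq> {}" and nn: "\<And>x. x \<in> A \<Longrightarrow> f x \<ge> 0"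
  shows "(INF x\<in>A. f x) = 0 \<longleftrightarrow> (\<forall>e>0. \<exists>x\<in>A. f x < e)"
proof -
  have bdd: "bdd_below (f ` A)" using nn by (intro bdd_belowI2[where m=0]) auto
  have ge: "(INF x\<in>A. f x) \<ge> 0" using A nn by (intro cINF_greatest) auto
  show ?thesis
  proof
    assume h: "(INF x\<in>A. f x) = 0"
    show "\<forall>e>0. \<exists>x\<in>A. f x < e"
    proof (intro allI impI)
      fix e :: real assume "e > 0"
      then have "(INF x\<in>A. f x) < e" using h by simp
      then show "\<exists>x\<in>A. f x < e" using cINF_less_iff[OF A bdd] by blast
    qed
  next
    assume h: "\<forall>e>0. \<exists>x\<in>A. f x < e"
    show "(INF x\<in>A. f x) = 0"
    proof (rule ccontr)
      assume "(INF x\<in>A. f x) \<noteq> 0"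
      then have "(INF x\<in>A. f x) > 0" using ge by simp
      then obtain x where "x \<in> A" "f x < (INF x\<in>A. f x)" using h by blast
      then show False using cINF_lower[OF bdd, of x] by simp
    qed
  qed
qed

lemma Nd_PiE: "z \<in> Nd d X T Ti \<Longrightarrow> z \<in> PiE {1..d} (\<lambda>_. X)"
  unfolding Nd_def by simp

locale L =
  fixes X :: "'a::metric_space set" and Y :: "'b::metric_space set"
    and TX TXi :: "'a \<Rightarrow> 'a" and TY TYi :: "'b \<Rightarrow> 'b"
    and \<pi> :: "'a \<Rightarrow> 'b" and d :: nat
  assumes cX: "compact X" and cY: "compact Y"
    and hX: "homeomorphism X X TX TXi" and hY: "homeomorphism Y Y TY TYi"
    and mX: "minimal_sys dist X UNIV (zit TX TXi)"
    and mY: "minimal_sys dist Y UNIV (zit TY TYi)"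
    and ext: "is_extension dist dist X Y UNIV (zit TX TXi) (zit TY TYi) \<pi>"
    and d1: "d \<ge> 1"
begin

lemma piX: "\<pi> ` X = Y" using ext unfolding is_extension_def by simp

lemma eqv: "x \<in> X \<Longrightarrow> \<pi> (zit TX TXi n x) = zit TY TYi n (\<pi> x)"
  using ext unfolding is_extension_def by simp

lemma pc: "continuous_on X \<pi>"
  using ext unfolding is_extension_def cont_wrt_def continuous_on_iff
  by (metis dist_commute)

lemma uc: "e > 0 \<Longrightarrow> \<exists>\<delta>>0. \<forall>x\<in>X. \<forall>x'\<in>X. dist x x' < \<delta> \<longrightarrow> dist (\<pi> x) (\<pi> x') < e"
  using compact_uniformly_continuous[OF pc cX] unfolding uniformly_continuous_on_def
  by (metis dist_commute)

lemma Nd_in: "z \<in> Nd d X TX TXi \<Longrightarrow> i \<in> {1..d} \<Longrightarrow> z i \<in> X"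
  using Nd_PiE by fastforce

lemma Nd_out: "z \<in> Nd d X TX TXi \<Longrightarrow> i \<notin> {1..d} \<Longrightarrow> z i = undefined"
  using Nd_PiE by fastforce

lemma prod_map_app: "i \<in> {1..d} \<Longrightarrow> prod_map d \<pi> z i = \<pi> (z i)"
  unfolding prod_map_def by simp

lemma prod_map_eq: "z \<in> Nd d X TX TXi \<Longrightarrow> z' \<in> Nd d X TX TXi \<Longrightarrow> prod_map d \<pi> z = prod_map d \<pi> z'
  \<Longrightarrow> i \<in> {1..d} \<Longrightarrow> \<pi> (z i) = \<pi> (z' i)"
  by (metis prod_map_app)

lemma image_sub: "prod_map d \<pi> ` Nd d X TX TXi \<subseteq> Nd d Y TY TYi"
proof
  fix w assume "w \<in> prod_map d \<pi> ` Nd d X TX TXi"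
  then obtain z where z: "z \<in> Nd d X TX TXi" and w: "w = prod_map d \<pi> z" by blast
  have "w \<in> PiE {1..d} (\<lambda>_. Y)" using w Nd_in[OF z] piX unfolding prod_map_def by auto
  moreover have "\<forall>e>0. \<exists>y\<in>Y. \<exists>p q::int. maxdist_d d dist w (\<lambda>i\<in>{1..d}. zit TY TYi (p + int i * q) y) < e"
  proof (intro allI impI)
    fix e :: real assume e: "e > 0"
    obtain \<delta> where \<delta>: "\<delta> > 0" "\<forall>x\<in>X. \<forall>x'\<in>X. dist x x' < \<delta> \<longrightarrow> dist (\<pi> x) (\<pi> x') < e"
      using uc[OF e] by blast
    obtain x p q where x: "x \<in> X" and m: "maxdist_d d dist z (\<lambda>i\<in>{1..d}. zit TX TXi (p + int i * q) x) < \<delta>"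
      using z \<delta>(1) unfolding Nd_def by blast
    have "maxdist_d d dist w (\<lambda>i\<in>{1..d}. zit TY TYi (p + int i * q) (\<pi> x)) < e"
      unfolding maxdist_less[OF d1]
    proof
      fix i assume i: "i \<in> {1..d}"
      have "dist (z i) (zit TX TXi (p + int i * q) x) < \<delta>" using m i unfolding maxdist_less[OF d1] by auto
      then have "dist (\<pi> (z i)) (\<pi> (zit TX TXi (p + int i * q) x)) < e"
        using \<delta>(2) Nd_in[OF z i] zit_in[OF hX x] by blast
      then show "dist (w i) ((\<lambda>i\<in>{1..d}. zit TY TYi (p + int i * q) (\<pi> x)) i) < e"
        using i w eqv[OF x] by (simp add: prod_map_app)
    qed
    then show "\<exists>y\<in>Y. \<exists>p q::int. maxdist_d d dist w (\<lambda>i\<in>{1..d}. zit TY TYi (p + int i * q) y) < e"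
      using x piX by blast
  qed
  ultimately show "w \<in> Nd d Y TY TYi" unfolding Nd_def by blast
qed

lemma image_sup: "Nd d Y TY TYi \<subseteq> prod_map d \<pi> ` Nd d X TX TXi"
proof
  fix y assume y: "y \<in> Nd d Y TY TYi"
  have "\<forall>k. \<exists>xt p q. xt \<in> X \<and> maxdist_d d dist y (\<lambda>i\<in>{1..d}. zit TY TYi (p + int i * q) (\<pi> xt)) < inverse (real (Suc k))"
  proof
    fix k
    obtain x p q where "x \<in> Y" "maxdist_d d dist y (\<lambda>i\<in>{1..d}. zit TY TYi (p + int i * q) x) < inverse (real (Suc k))"
    proof -
      have "inverse (real (Suc k)) > 0" by simp
      then show ?thesis using y that unfolding Nd_def by blast
    qed
    moreover obtain xt where "xt \<in> X" "x = \<pi> xt" using piX \<open>x \<in> Y\<close> by blast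
    ultimately show "\<exists>xt p q. xt \<in> X \<and> maxdist_d d dist y (\<lambda>i\<in>{1..d}. zit TY TYi (p + int i * q) (\<pi> xt)) < inverse (real (Suc k))"
      by blast
  qed
  then have "\<forall>k. \<exists>t. fst t \<in> X \<and> maxdist_d d dist y (\<lambda>i\<in>{1..d}. zit TY TYi (fst (snd t) + int i * snd (snd t)) (\<pi> (fst t))) < inverse (real (Suc k))"
    by simp
  then have "\<exists>F. \<forall>k. fst (F k) \<in> X \<and> maxdist_d d dist y (\<lambda>i\<in>{1..d}. zit TY TYi (fst (snd (F k)) + int i * snd (snd (F k))) (\<pi> (fst (F k)))) < inverse (real (Suc k))"
    by (rule choice)
  then obtain F where F: "\<forall>k. fst (F k) \<in> X \<and> maxdist_d d dist y (\<lambda>i\<in>{1..d}. zit TY TYi (fst (snd (F k)) + int i * snd (snd (F k))) (\<pi> (fst (F k)))) < inverse (real (Suc k))"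
    by blast
  define XT where "XT = (\<lambda>k. fst (F k))"
  define P where "P = (\<lambda>k. fst (snd (F k)))"
  define Q where "Q = (\<lambda>k. snd (snd (F k)))"
  have XT: "\<And>k. XT k \<in> X" using F unfolding XT_def by blast
  have M: "\<And>k. maxdist_d d dist y (\<lambda>i\<in>{1..d}. zit TY TYi (P k + int i * Q k) (\<pi> (XT k))) < inverse (real (Suc k))"
    using F unfolding XT_def P_def Q_def by blast
  define W where "W = (\<lambda>k i. zit TX TXi (P k + int i * Q k) (XT k))"
  have "\<forall>k. \<forall>i\<in>{1..d}. W k i \<in> X" unfolding W_def using zit_in[OF hX XT] by blast
  from finite_subseq[OF cX _ this] obtain r c where r: "strict_mono r"
    and c: "\<forall>i\<in>{1..d}. c i \<in> X \<and> (\<lambda>k. W (r k) i) \<longlonglongrightarrow> c i" by blast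
  define z where "z = restrict c {1..d}"
  have zN: "z \<in> Nd d X TX TXi"
    unfolding Nd_def
  proof (intro CollectI conjI allI impI)
    show "z \<in> PiE {1..d} (\<lambda>_. X)" using c unfolding z_def by auto
    fix e :: real assume e: "e > 0"
    have "\<forall>\<^sub>F k in sequentially. \<forall>i\<in>{1..d}. dist (W (r k) i) (c i) < e"
      using c e by (intro eventually_ball_finite) (auto intro: tendstoD)
    then obtain K where K: "\<forall>i\<in>{1..d}. dist (W (r K) i) (c i) < e"
      unfolding eventually_sequentially by blast
    have "maxdist_d d dist z (\<lambda>i\<in>{1..d}. zit TX TXi (P (r K) + int i * Q (r K)) (XT (r K))) < e"
      unfolding maxdist_less[OF d1] using K unfolding z_def W_def by (simp add: dist_commute)
    then show "\<exists>x\<in>X. \<exists>p q::int. maxdist_d d dist z (\<lambda>i\<in>{1..d}. zit TX TXi (p + int i * q) x) < e"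
      using XT by blast
  qed
  have "prod_map d \<pi> z = y"
  proof
    fix i
    show "prod_map d \<pi> z i = y i"
    proof (cases "i \<in> {1..d}")
      case False
      then show ?thesis using Nd_PiE[OF y] unfolding prod_map_def by (auto simp: PiE_def extensional_def)
    next
      case i: True
      have l1: "(\<lambda>k. \<pi> (W (r k) i)) \<longlonglongrightarrow> \<pi> (c i)"
        using continuous_on_tendsto_compose[OF pc, of "\<lambda>k. W (r k) i" "c i"] c i
          \<open>\<forall>k. \<forall>i\<in>{1..d}. W k i \<in> X\<close> by auto
      have eqW: "\<And>k. \<pi> (W k i) = zit TY TYi (P k + int i * Q k) (\<pi> (XT k))"
        unfolding W_def using eqv[OF XT] by simp
      have inv0: "(\<lambda>k. inverse (real (Suc (r k)))) \<longlonglongrightarrow> 0"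
        using LIMSEQ_subseq_LIMSEQ[OF LIMSEQ_inverse_real_of_nat r] by (simp add: o_def)
      have "(\<lambda>k. dist (\<pi> (W (r k) i)) (y i)) \<longlonglongrightarrow> 0"
      proof (rule tendsto_sandwich[OF _ _ tendsto_const inv0])
        show "\<forall>\<^sub>F n in sequentially. 0 \<le> dist (\<pi> (W (r n) i)) (y i)" by simp
        show "\<forall>\<^sub>F n in sequentially. dist (\<pi> (W (r n) i)) (y i) \<le> inverse (real (Suc (r n)))"
        proof (intro always_eventually allI)
          fix n
          have "dist (y i) (zit TY TYi (P (r n) + int i * Q (r n)) (\<pi> (XT (r n)))) < inverse (real (Suc (r n)))"
            using M[of "r n"] i unfolding maxdist_less[OF d1] by auto
          then show "dist (\<pi> (W (r n) i)) (y i) \<le> inverse (real (Suc (r n)))"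
            unfolding eqW by (simp add: dist_commute)
        qed
      qed
      then have l2: "(\<lambda>k. \<pi> (W (r k) i)) \<longlonglongrightarrow> y i" by (rule tendsto_dist_iff[THEN iffD2])
      have "\<pi> (c i) = y i" by (rule LIMSEQ_unique[OF l1 l2])
      moreover have "prod_map d \<pi> z i = \<pi> (c i)" using i unfolding prod_map_app[OF i] z_def by simp
      ultimately show ?thesis by simp
    qed
  qed
  then show "y \<in> prod_map d \<pi> ` Nd d X TX TXi" using zN by (metis image_eqI)
qed

lemma part_ext: "is_extension (maxdist_d d dist) (maxdist_d d dist) (Nd d X TX TXi) (Nd d Y TY TYi)
           UNIV (Gd_act d TX TXi) (Gd_act d TY TYi) (prod_map d \<pi>)"
  unfolding is_extension_def
proof (intro conjI ballI)
  show "prod_map d \<pi> ` Nd d X TX TXi = Nd d Y TY TYi" using image_sub image_sup by blast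
  show "cont_wrt (maxdist_d d dist) (maxdist_d d dist) (Nd d X TX TXi) (prod_map d \<pi>)"
    unfolding cont_wrt_def
  proof (intro ballI allI impI)
    fix z e assume z: "z \<in> Nd d X TX TXi" and e: "(e::real) > 0"
    obtain \<delta> where \<delta>: "\<delta> > 0" "\<forall>x\<in>X. \<forall>x'\<in>X. dist x x' < \<delta> \<longrightarrow> dist (\<pi> x) (\<pi> x') < e"
      using uc[OF e] by blast
    show "\<exists>\<delta>>0. \<forall>x'\<in>Nd d X TX TXi. maxdist_d d dist z x' < \<delta> \<longrightarrow>
              maxdist_d d dist (prod_map d \<pi> z) (prod_map d \<pi> x') < e"
    proof (intro exI conjI ballI impI)
      show "\<delta> > 0" by fact
      fix z' assume z': "z' \<in> Nd d X TX TXi" and m: "maxdist_d d dist z z' < \<delta>"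
      show "maxdist_d d dist (prod_map d \<pi> z) (prod_map d \<pi> z') < e"
        unfolding maxdist_less[OF d1]
      proof
        fix i assume i: "i \<in> {1..d}"
        have "dist (z i) (z' i) < \<delta>" using m i unfolding maxdist_less[OF d1] by auto
        then show "dist (prod_map d \<pi> z i) (prod_map d \<pi> z' i) < e"
          using \<delta>(2) Nd_in[OF z i] Nd_in[OF z' i] i by (simp add: prod_map_app)
      qed
    qed
  qed
  fix g :: "int \<times> int" and z assume z: "z \<in> Nd d X TX TXi"
  show "prod_map d \<pi> (Gd_act d TX TXi g z) = Gd_act d TY TYi g (prod_map d \<pi> z)"
  proof
    fix i show "prod_map d \<pi> (Gd_act d TX TXi g z) i = Gd_act d TY TYi g (prod_map d \<pi> z) i"
      using eqv[OF Nd_in[OF z]]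
      by (cases "i \<in> {1..d}") (auto simp add: prod_map_def Gd_act_def case_prod_beta)
  qed
qed

end




context L begin

lemma part_a11: "almost_one_one X \<pi> \<Longrightarrow> almost_one_one (Nd d X TX TXi) (prod_map d \<pi>)"
  unfolding almost_one_one_def
proof -
  assume "\<exists>x\<in>X. \<forall>x'\<in>X. \<pi> x' = \<pi> x \<longrightarrow> x' = x"
  then obtain x0 where x0: "x0 \<in> X" and u: "\<forall>x'\<in>X. \<pi> x' = \<pi> x0 \<longrightarrow> x' = x0" by blast
  define z0 where "z0 = (\<lambda>i\<in>{1..d}. x0)"
  have zN: "z0 \<in> Nd d X TX TXi"
    unfolding Nd_def
  proof (intro CollectI conjI allI impI)
    show "z0 \<in> PiE {1..d} (\<lambda>_. X)" using x0 unfolding z0_def by auto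
    fix e :: real assume e: "e > 0"
    have "maxdist_d d dist z0 (\<lambda>i\<in>{1..d}. zit TX TXi (0 + int i * 0) x0) < e"
      unfolding maxdist_less[OF d1] using e unfolding z0_def by simp
    then show "\<exists>x\<in>X. \<exists>p q::int. maxdist_d d dist z0 (\<lambda>i\<in>{1..d}. zit TX TXi (p + int i * q) x) < e"
      using x0 by blast
  qed
  have "\<forall>z'\<in>Nd d X TX TXi. prod_map d \<pi> z' = prod_map d \<pi> z0 \<longrightarrow> z' = z0"
  proof (intro ballI impI)
    fix z' assume z': "z' \<in> Nd d X TX TXi" and eq: "prod_map d \<pi> z' = prod_map d \<pi> z0"
    show "z' = z0"
    proof
      fix i show "z' i = z0 i"
      proof (cases "i \<in> {1..d}")
        case True
        then have "\<pi> (z' i) = \<pi> x0" using prod_map_eq[OF z' zN eq True] unfolding z0_def by simp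
        then show ?thesis using u Nd_in[OF z' True] True unfolding z0_def by simp
      next
        case False then show ?thesis using Nd_out[OF z' False] unfolding z0_def by auto
      qed
    qed
  qed
  then show "\<exists>z\<in>Nd d X TX TXi. \<forall>z'\<in>Nd d X TX TXi. prod_map d \<pi> z' = prod_map d \<pi> z \<longrightarrow> z' = z"
    using zN by blast
qed

lemma part_prox: "proximal_ext dist X UNIV (zit TX TXi) \<pi> \<Longrightarrow>
         proximal_ext (maxdist_d d dist) (Nd d X TX TXi) UNIV (Gd_act d TX TXi) (prod_map d \<pi>)"
proof -
  assume P: "proximal_ext dist X UNIV (zit TX TXi) \<pi>"
  have prox: "\<And>x x' e. x \<in> X \<Longrightarrow> x' \<in> X \<Longrightarrow> \<pi> x = \<pi> x' \<Longrightarrow> e > 0 \<Longrightarrow>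
      \<exists>n. dist (zit TX TXi n x) (zit TX TXi n x') < e"
  proof -
    fix x x' and e :: real assume "x \<in> X" "x' \<in> X" "\<pi> x = \<pi> x'" "e > 0"
    then have "(INF n\<in>UNIV. dist (zit TX TXi n x) (zit TX TXi n x')) = 0"
      using P unfolding proximal_ext_def proximal_pair_def by blast
    then show "\<exists>n. dist (zit TX TXi n x) (zit TX TXi n x') < e"
      using inf0_iff[of UNIV "\<lambda>n. dist (zit TX TXi n x) (zit TX TXi n x')"] \<open>e > 0\<close> by auto
  qed
  show ?thesis
    unfolding proximal_ext_def proximal_pair_def
  proof (intro ballI impI)
    fix z z' assume z: "z \<in> Nd d X TX TXi" and z': "z' \<in> Nd d X TX TXi"
      and eq: "prod_map d \<pi> z = prod_map d \<pi> z'"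
    show "(INF g\<in>UNIV. maxdist_d d dist (Gd_act d TX TXi g z) (Gd_act d TX TXi g z')) = 0"
    proof (subst inf0_iff)
      show "UNIV \<noteq> {}" by simp
      show "\<And>g. g \<in> UNIV \<Longrightarrow> 0 \<le> maxdist_d d dist (Gd_act d TX TXi g z) (Gd_act d TX TXi g z')"
        using maxdist_nonneg[OF d1] by blast
      show "\<forall>e>0. \<exists>g\<in>UNIV. maxdist_d d dist (Gd_act d TX TXi g z) (Gd_act d TX TXi g z') < e"
      proof (intro allI impI)
        fix e :: real assume e: "e > 0"
        have "\<forall>i\<in>{1..d}. z i \<in> X \<and> z' i \<in> X \<and> \<pi> (z i) = \<pi> (z' i)"
          using Nd_in[OF z] Nd_in[OF z'] prod_map_eq[OF z z' eq] by blast
        from prox_prod[where T="zit TX TXi" and TY="zit TY TYi", OF cX zit_in[OF hX] zit_cont[OF hX]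
            zit_add[OF hX, rule_format] pc eqv prox finite_atLeastAtMost this e]
        obtain n where n: "\<forall>i\<in>{1..d}. dist (zit TX TXi n (z i)) (zit TX TXi n (z' i)) < e" by blast
        have "maxdist_d d dist (Gd_act d TX TXi (n,0) z) (Gd_act d TX TXi (n,0) z') < e"
          unfolding maxdist_less[OF d1] using n by (simp add: Gd_act_app)
        then show "\<exists>g\<in>UNIV. maxdist_d d dist (Gd_act d TX TXi g z) (Gd_act d TX TXi g z') < e" by blast
      qed
    qed
  qed
qed

lemma part_distal: "distal_ext dist X UNIV (zit TX TXi) \<pi> \<Longrightarrow>
         distal_ext (maxdist_d d dist) (Nd d X TX TXi) UNIV (Gd_act d TX TXi) (prod_map d \<pi>)"
  unfolding distal_ext_def
proof (intro ballI impI notI)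
  assume D: "\<forall>x\<in>X. \<forall>x'\<in>X. \<pi> x = \<pi> x' \<and> x \<noteq> x' \<longrightarrow> \<not> proximal_pair dist UNIV (zit TX TXi) x x'"
  fix z z' assume z: "z \<in> Nd d X TX TXi" and z': "z' \<in> Nd d X TX TXi"
    and h: "prod_map d \<pi> z = prod_map d \<pi> z' \<and> z \<noteq> z'"
    and pp: "proximal_pair (maxdist_d d dist) UNIV (Gd_act d TX TXi) z z'"
  obtain i where i: "i \<in> {1..d}" and ne: "z i \<noteq> z' i"
  proof -
    have "\<exists>i\<in>{1..d}. z i \<noteq> z' i"
    proof (rule ccontr)
      assume "\<not> (\<exists>i\<in>{1..d}. z i \<noteq> z' i)"
      then have "z = z'"
      proof -
        assume a: "\<not> (\<exists>i\<in>{1..d}. z i \<noteq> z' i)"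
        show "z = z'"
        proof
          fix j show "z j = z' j" using a Nd_out[OF z, of j] Nd_out[OF z', of j] by (cases "j \<in> {1..d}") auto
        qed
      qed
      then show False using h by blast
    qed
    then show ?thesis using that by blast
  qed
  have "\<pi> (z i) = \<pi> (z' i)" using prod_map_eq[OF z z' _ i] h by blast
  then have np: "\<not> proximal_pair dist UNIV (zit TX TXi) (z i) (z' i)"
    using D Nd_in[OF z i] Nd_in[OF z' i] ne by blast
  have "\<forall>e>0. \<exists>n. dist (zit TX TXi n (z i)) (zit TX TXi n (z' i)) < e"
  proof (intro allI impI)
    fix e :: real assume e: "e > 0"
    have "\<forall>e>0. \<exists>g\<in>UNIV. maxdist_d d dist (Gd_act d TX TXi g z) (Gd_act d TX TXi g z') < e"
      using pp unfolding proximal_pair_def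
      by (subst (asm) inf0_iff) (auto intro: maxdist_nonneg[OF d1])
    then obtain g where g: "maxdist_d d dist (Gd_act d TX TXi g z) (Gd_act d TX TXi g z') < e"
      using e by blast
    have "dist (Gd_act d TX TXi g z i) (Gd_act d TX TXi g z' i) < e"
      using g i unfolding maxdist_less[OF d1] by blast
    then show "\<exists>n. dist (zit TX TXi n (z i)) (zit TX TXi n (z' i)) < e"
      using i by (auto simp: Gd_act_app)
  qed
  then have "proximal_pair dist UNIV (zit TX TXi) (z i) (z' i)"
    unfolding proximal_pair_def by (subst inf0_iff) auto
  then show False using np by blast
qed

lemma boundX: "\<exists>B. \<forall>x\<in>X. \<forall>y\<in>X. dist x y \<le> B"
proof -
  obtain a e where "\<forall>y\<in>X. dist a y \<le> e" using compact_imp_bounded[OF cX] unfolding bounded_def by blast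
  then have "\<forall>x\<in>X. \<forall>y\<in>X. dist x y \<le> 2 * e"
    by (metis dist_commute dist_triangle mult_2 add_mono order_trans)
  then show ?thesis by blast
qed

lemma part_eq: "equicont_ext dist X UNIV (zit TX TXi) \<pi> \<Longrightarrow>
         equicont_ext (maxdist_d d dist) (Nd d X TX TXi) UNIV (Gd_act d TX TXi) (prod_map d \<pi>)"
  unfolding equicont_ext_def
proof (intro allI impI)
  assume E: "\<forall>e>0. \<exists>\<delta>>0. \<forall>x\<in>X. \<forall>x'\<in>X. \<pi> x = \<pi> x' \<and> dist x x' < \<delta> \<longrightarrow>
        (SUP g\<in>UNIV. dist (zit TX TXi g x) (zit TX TXi g x')) < e"
  fix e :: real assume e: "e > 0"
  obtain B where B: "\<forall>x\<in>X. \<forall>y\<in>X. dist x y \<le> B" using boundX by blast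
  obtain \<delta> where \<delta>: "\<delta> > 0" and H: "\<forall>x\<in>X. \<forall>x'\<in>X. \<pi> x = \<pi> x' \<and> dist x x' < \<delta> \<longrightarrow>
        (SUP g\<in>UNIV. dist (zit TX TXi g x) (zit TX TXi g x')) < e/2"
    using E e by (metis half_gt_zero)
  show "\<exists>\<delta>>0. \<forall>z\<in>Nd d X TX TXi. \<forall>z'\<in>Nd d X TX TXi. prod_map d \<pi> z = prod_map d \<pi> z' \<and> maxdist_d d dist z z' < \<delta> \<longrightarrow>
        (SUP g\<in>UNIV. maxdist_d d dist (Gd_act d TX TXi g z) (Gd_act d TX TXi g z')) < e"
  proof (intro exI conjI ballI impI)
    show "\<delta> > 0" by fact
    fix z z' assume z: "z \<in> Nd d X TX TXi" and z': "z' \<in> Nd d X TX TXi"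
      and h: "prod_map d \<pi> z = prod_map d \<pi> z' \<and> maxdist_d d dist z z' < \<delta>"
    have "(SUP g\<in>UNIV. maxdist_d d dist (Gd_act d TX TXi g z) (Gd_act d TX TXi g z')) \<le> e/2"
    proof (rule cSUP_least)
      show "UNIV \<noteq> {}" by simp
      fix g :: "int \<times> int"
      show "maxdist_d d dist (Gd_act d TX TXi g z) (Gd_act d TX TXi g z') \<le> e/2"
        unfolding maxdist_le[OF d1]
      proof
        fix i assume i: "i \<in> {1..d}"
        have xi: "z i \<in> X" "z' i \<in> X" using Nd_in z z' i by auto
        have "\<pi> (z i) = \<pi> (z' i)" using prod_map_eq[OF z z' _ i] h by blast
        moreover have "dist (z i) (z' i) < \<delta>" using h i unfolding maxdist_less[OF d1] by blast
        ultimately have S: "(SUP g\<in>UNIV. dist (zit TX TXi g (z i)) (zit TX TXi g (z' i))) < e/2"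
          using H xi by blast
        have bdd: "bdd_above (range (\<lambda>g. dist (zit TX TXi g (z i)) (zit TX TXi g (z' i))))"
          using B zit_in[OF hX xi(1)] zit_in[OF hX xi(2)] by (intro bdd_aboveI2[where M=B]) blast
        have "dist (zit TX TXi (fst g + int i * snd g) (z i)) (zit TX TXi (fst g + int i * snd g) (z' i))
              \<le> (SUP g\<in>UNIV. dist (zit TX TXi g (z i)) (zit TX TXi g (z' i)))"
          by (rule cSUP_upper[OF _ bdd]) simp
        then show "dist (Gd_act d TX TXi g z i) (Gd_act d TX TXi g z' i) \<le> e/2"
          using S i by (simp add: Gd_act_app)
      qed
    qed
    then show "(SUP g\<in>UNIV. maxdist_d d dist (Gd_act d TX TXi g z) (Gd_act d TX TXi g z')) < e"
      using e by linarith
  qed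
qed

end

theorem lemma5p5:
  fixes X :: "'a::metric_space set" and Y :: "'b::metric_space set"
    and TX TXi :: "'a \<Rightarrow> 'a" and TY TYi :: "'b \<Rightarrow> 'b"
    and \<pi> :: "'a \<Rightarrow> 'b" and d :: nat
  assumes "compact X" and "compact Y"
    and "homeomorphism X X TX TXi" and "homeomorphism Y Y TY TYi"
    and "minimal_sys dist X UNIV (zit TX TXi)"
    and "minimal_sys dist Y UNIV (zit TY TYi)"
    and "is_extension dist dist X Y UNIV (zit TX TXi) (zit TY TYi) \<pi>"
    and "d \<ge> 1"
  shows "is_extension (maxdist_d d dist) (maxdist_d d dist) (Nd d X TX TXi) (Nd d Y TY TYi)
           UNIV (Gd_act d TX TXi) (Gd_act d TY TYi) (prod_map d \<pi>)
    \<and> (almost_one_one X \<pi> \<longrightarrow> almost_one_one (Nd d X TX TXi) (prod_map d \<pi>))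
    \<and> (proximal_ext dist X UNIV (zit TX TXi) \<pi> \<longrightarrow>
         proximal_ext (maxdist_d d dist) (Nd d X TX TXi) UNIV (Gd_act d TX TXi) (prod_map d \<pi>))
    \<and> (equicont_ext dist X UNIV (zit TX TXi) \<pi> \<longrightarrow>
         equicont_ext (maxdist_d d dist) (Nd d X TX TXi) UNIV (Gd_act d TX TXi) (prod_map d \<pi>))
    \<and> (distal_ext dist X UNIV (zit TX TXi) \<pi> \<longrightarrow>
         distal_ext (maxdist_d d dist) (Nd d X TX TXi) UNIV (Gd_act d TX TXi) (prod_map d \<pi>))"
proof -
  interpret L X Y TX TXi TY TYi \<pi> d using assms by unfold_locales
  show ?thesis using part_ext part_a11 part_prox part_eq part_distal by blast
qed


end
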